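(* There exists no function $f:\mathbb{N}\to\mathbb{N}$ such that $\chi_{\mu_2}(G\,\square\, G)\le f(\chi_{\mu_2}(G))$ holds for all graphs $G$.
   Context: The Cartesian product $G\,\square\, H$ has vertex set $V(G)\times V(H)$, with $(g,h)$ adjacent to $(g',h')$ iff either $g=g'$ and $hh'\in E(H)$, or $gg'\in E(G)$ and $h=h'$. A set $M\subseteq V(X)$ is a $2$-distance mutual-visibility set if for every two vertices $u,v\in M$ there exists a shortest $u,v$-path of length at most $2$ none of whose internal vertices lies in $M$. $\chi_{\mu_2}(X)$ is the minimum cardinality of a partition of $V(X)$ into $2$-distance mutual-visibility sets. *)

theory Defs
  imports Main "HOL-Library.Disjoint_Sets"
begin

definition simple_graph :: "'a set \<Rightarrow> ('a \<Rightarrow> 'a \<Rightarrow> bool) \<Rightarrow> bool" where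
  "simple_graph V E \<longleftrightarrow> finite V \<and> (\<forall>x y. E x y \<longrightarrow> x \<in> V \<and> y \<in> V)
     \<and> (\<forall>x y. E x y \<longrightarrow> E y x) \<and> (\<forall>x. \<not> E x x)"

definition cart_edges :: "('a \<Rightarrow> 'a \<Rightarrow> bool) \<Rightarrow> ('b \<Rightarrow> 'b \<Rightarrow> bool)
    \<Rightarrow> ('a \<times> 'b) \<Rightarrow> ('a \<times> 'b) \<Rightarrow> bool" where
  "cart_edges E F = (\<lambda>(g, h) (g', h'). (g = g' \<and> F h h') \<or> (E g g' \<and> h = h'))"

text \<open>2-distance mutual-visibility set: any two vertices u, v of M are joined by a shortest
  path of length at most 2 with no internal vertex in M. For u = v or u adjacent to v this
  is the trivial path; otherwise d(u,v) = 2 and the path is u - w - v with w not in M.\<close>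
definition mv2_set :: "'a set \<Rightarrow> ('a \<Rightarrow> 'a \<Rightarrow> bool) \<Rightarrow> 'a set \<Rightarrow> bool" where
  "mv2_set V E M \<longleftrightarrow> M \<subseteq> V \<and>
     (\<forall>u\<in>M. \<forall>v\<in>M. u = v \<or> E u v \<or> (\<exists>w\<in>V. E u w \<and> E w v \<and> w \<notin> M))"

definition chi_mu2 :: "'a set \<Rightarrow> ('a \<Rightarrow> 'a \<Rightarrow> bool) \<Rightarrow> nat" where
  "chi_mu2 V E = (LEAST k. \<exists>P. partition_on V P \<and> card P = k \<and> (\<forall>M\<in>P. mv2_set V E M))"

end

theory Submission
  imports Defs
begin

definition starE :: "nat \<Rightarrow> nat \<Rightarrow> nat \<Rightarrow> bool" where
  "starE n x y \<longleftrightarrow> (x = 0 \<and> y \<in> {1..n}) \<or> (y = 0 \<and> x \<in> {1..n})"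

lemma star_simple: "simple_graph {0..n} (starE n)"
  unfolding simple_graph_def starE_def by auto

lemma star_chi: assumes "n \<ge> 1" shows "chi_mu2 {0..n} (starE n) \<le> 2"
proof -
  let ?P = "{{0}, {1..n}} :: nat set set"
  have "partition_on {0..n} ?P"
    unfolding partition_on_def disjoint_def using assms by auto
  moreover have "card ?P = 2"
  proof -
    have "{0} \<noteq> {1..n}" using assms by (metis atLeastAtMost_iff insertI1 not_one_le_zero)
    then show ?thesis by simp
  qed
  moreover have "\<forall>M\<in>?P. mv2_set {0..n} (starE n) M"
    unfolding mv2_set_def starE_def by auto
  ultimately show ?thesis unfolding chi_mu2_def by (intro Least_le) blast
qed

lemma prod_chi: "chi_mu2 ({0..n} \<times> {0..n}) (cart_edges (starE n) (starE n)) \<ge> n"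
proof -
  let ?V = "{0..n} \<times> {0..(n::nat)}"
  let ?E = "cart_edges (starE n) (starE n)"
  let ?Q = "\<lambda>k. \<exists>P. partition_on ?V P \<and> card P = k \<and> (\<forall>M\<in>P. mv2_set ?V ?E M)"
  have ex: "\<exists>k. ?Q k"
  proof -
    let ?P = "(\<lambda>x. {x}) ` ?V"
    have "partition_on ?V ?P" unfolding partition_on_def disjoint_def by auto
    moreover have "\<forall>M\<in>?P. mv2_set ?V ?E M" unfolding mv2_set_def by auto
    ultimately show ?thesis by blast
  qed
  have "n \<le> k" if Qk: "?Q k" for k
  proof -
    obtain P where P: "partition_on ?V P" "card P = k" "\<forall>M\<in>P. mv2_set ?V ?E M"
      using Qk by blast
    have fin: "finite P"
    proof -
      have "P \<subseteq> Pow ?V" using P(1) unfolding partition_on_def by auto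
      then show ?thesis by (rule finite_subset) simp
    qed
    define h where "h = (\<lambda>i. SOME M. M \<in> P \<and> (i, i) \<in> M)"
    have hP: "h i \<in> P \<and> (i, i) \<in> h i" if "i \<in> {1..n}" for i
    proof -
      have "(i, i) \<in> \<Union>P" using P(1) that unfolding partition_on_def by auto
      then have "\<exists>M. M \<in> P \<and> (i, i) \<in> M" by blast
      then show ?thesis unfolding h_def by (rule someI_ex)
    qed
    have "inj_on h {1..n}"
    proof (rule inj_onI)
      fix i j assume i: "i \<in> {1..n}" and j: "j \<in> {1..n}" and eq: "h i = h j"
      have mv: "mv2_set ?V ?E (h i)" using hP[OF i] P(3) by blast
      have a: "(i,i) \<in> h i" and b: "(j,j) \<in> h i" using hP[OF i] hP[OF j] eq by auto
      show "i = j"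
      proof (rule ccontr)
        assume ne: "i \<noteq> j"
        from mv a b have "(i,i) = (j,j) \<or> ?E (i,i) (j,j) \<or> (\<exists>w\<in>?V. ?E (i,i) w \<and> ?E w (j,j) \<and> w \<notin> h i)"
          unfolding mv2_set_def by blast
        then show False using ne i j unfolding cart_edges_def starE_def by auto
      qed
    qed
    moreover have "h ` {1..n} \<subseteq> P" using hP by auto
    ultimately have "card {1..n} \<le> card P" using fin by (rule card_inj_on_le)
    then show ?thesis using P(2) by simp
  qed
  then show ?thesis unfolding chi_mu2_def by (rule LeastI2_ex[OF ex])
qed

theorem mainTheorem15:
  shows "\<not> (\<exists>f :: nat \<Rightarrow> nat. \<forall>(V :: nat set) E. simple_graph V E \<longrightarrow>
            chi_mu2 (V \<times> V) (cart_edges E E) \<le> f (chi_mu2 V E))"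
proof
  assume "\<exists>f :: nat \<Rightarrow> nat. \<forall>(V :: nat set) E. simple_graph V E \<longrightarrow>
            chi_mu2 (V \<times> V) (cart_edges E E) \<le> f (chi_mu2 V E)"
  then obtain f :: "nat \<Rightarrow> nat" where f: "\<And>(V :: nat set) E. simple_graph V E \<Longrightarrow>
            chi_mu2 (V \<times> V) (cart_edges E E) \<le> f (chi_mu2 V E)" by blast
  define n where "n = Suc (f 0 + f 1 + f 2)"
  have n1: "n \<ge> 1" unfolding n_def by simp
  have c: "chi_mu2 {0..n} (starE n) \<le> 2" using star_chi[OF n1] .
  have "f (chi_mu2 {0..n} (starE n)) < n"
  proof -
    have "chi_mu2 {0..n} (starE n) = 0 \<or> chi_mu2 {0..n} (starE n) = 1 \<or> chi_mu2 {0..n} (starE n) = 2"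
      using c by linarith
    then show ?thesis unfolding n_def by auto
  qed
  moreover have "n \<le> f (chi_mu2 {0..n} (starE n))"
    using prod_chi[of n] f[OF star_simple[of n]] by linarith
  ultimately show False by simp
qed

end
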